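(* Let $\mathcal{S}=(\mathbb{Z},\le)$ and for $m\in\mathbb{N}$ let $\mathcal{S}_m$ be the substructure with universe $2\mathbb{Z}\cup(\mathbb{Z}\cap[-2m,2m])$, indexed by $\mathbb{N}$ with its usual order. Then $\lim_{\mathbb{N}}\mathrm{Th}(\mathcal{S}_m^* )=\mathrm{Th}(\mathcal{S}^* )$, while for each $m$, $\mathcal{S}_m$ is not an elementary substructure of $\mathcal{S}$, nor of $\mathcal{S}_k$ for any $k>m$.
   Context: $\mathrm{Th}(\mathcal{T}^* )$ is the set of sentences in the language $\{\le\}$ expanded by a constant for each element of the universe of $\mathcal{T}$ that are true in $\mathcal{T}$; all are regarded as subsets of the set of sentences with constants from $\mathbb{Z}$. For a family $\{\Delta_m\}_{m\in\mathbb{N}}$: $\limsup\Delta_m=\{\theta:\forall n\,\exists m\ge n\,[\theta\in\Delta_m]\}$, $\liminf\Delta_m=\{\theta:\exists n\,\forall m\ge n\,[\theta\in\Delta_m]\}$, and $\lim\Delta_m=\Delta$ means both equal $\Delta$. *)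

theory Defs
  imports Main
begin

text \<open>Structures are substructures of (Z, <=), given by their universe U.\<close>

datatype tm = Var nat | Cst int

datatype fm = FF | Le tm tm | Eq tm tm | Neg fm | Conj fm fm | Disj fm fm
  | Imp fm fm | Ex nat fm | All nat fm

fun tval :: "(nat \<Rightarrow> int) \<Rightarrow> tm \<Rightarrow> int" where
  "tval e (Var n) = e n"
| "tval e (Cst c) = c"

fun tvars :: "tm \<Rightarrow> nat set" where
  "tvars (Var n) = {n}"
| "tvars (Cst c) = {}"

fun tconsts :: "tm \<Rightarrow> int set" where
  "tconsts (Var n) = {}"
| "tconsts (Cst c) = {c}"

fun fv :: "fm \<Rightarrow> nat set" where
  "fv FF = {}"
| "fv (Le s t) = tvars s \<union> tvars t"
| "fv (Eq s t) = tvars s \<union> tvars t"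
| "fv (Neg p) = fv p"
| "fv (Conj p q) = fv p \<union> fv q"
| "fv (Disj p q) = fv p \<union> fv q"
| "fv (Imp p q) = fv p \<union> fv q"
| "fv (Ex n p) = fv p - {n}"
| "fv (All n p) = fv p - {n}"

fun fconsts :: "fm \<Rightarrow> int set" where
  "fconsts FF = {}"
| "fconsts (Le s t) = tconsts s \<union> tconsts t"
| "fconsts (Eq s t) = tconsts s \<union> tconsts t"
| "fconsts (Neg p) = fconsts p"
| "fconsts (Conj p q) = fconsts p \<union> fconsts q"
| "fconsts (Disj p q) = fconsts p \<union> fconsts q"
| "fconsts (Imp p q) = fconsts p \<union> fconsts q"
| "fconsts (Ex n p) = fconsts p"
| "fconsts (All n p) = fconsts p"

fun sat :: "int set \<Rightarrow> (nat \<Rightarrow> int) \<Rightarrow> fm \<Rightarrow> bool" where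
  "sat U e FF = False"
| "sat U e (Le s t) = (tval e s \<le> tval e t)"
| "sat U e (Eq s t) = (tval e s = tval e t)"
| "sat U e (Neg p) = (\<not> sat U e p)"
| "sat U e (Conj p q) = (sat U e p \<and> sat U e q)"
| "sat U e (Disj p q) = (sat U e p \<or> sat U e q)"
| "sat U e (Imp p q) = (sat U e p \<longrightarrow> sat U e q)"
| "sat U e (Ex n p) = (\<exists>x\<in>U. sat U (e(n := x)) p)"
| "sat U e (All n p) = (\<forall>x\<in>U. sat U (e(n := x)) p)"

definition sentence :: "fm \<Rightarrow> bool" where
  "sentence p \<longleftrightarrow> fv p = {}"

text \<open>Th(T*): sentences with constants from the universe U, true in the structure.\<close>
definition Th_star :: "int set \<Rightarrow> fm set" where
  "Th_star U = {p. sentence p \<and> fconsts p \<subseteq> U \<and> (\<forall>e. (\<forall>n. e n \<in> U) \<longrightarrow> sat U e p)}"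

definition limsup_fam :: "(nat \<Rightarrow> 'a set) \<Rightarrow> 'a set" where
  "limsup_fam D = {x. \<forall>n. \<exists>m\<ge>n. x \<in> D m}"

definition liminf_fam :: "(nat \<Rightarrow> 'a set) \<Rightarrow> 'a set" where
  "liminf_fam D = {x. \<exists>n. \<forall>m\<ge>n. x \<in> D m}"

definition has_lim :: "(nat \<Rightarrow> 'a set) \<Rightarrow> 'a set \<Rightarrow> bool" where
  "has_lim D L \<longleftrightarrow> limsup_fam D = L \<and> liminf_fam D = L"

definition elem_sub :: "int set \<Rightarrow> int set \<Rightarrow> bool" where
  "elem_sub A B \<longleftrightarrow> A \<subseteq> B \<and>
     (\<forall>p e. fconsts p \<subseteq> A \<longrightarrow> (\<forall>n. e n \<in> A) \<longrightarrow> (sat A e p \<longleftrightarrow> sat B e p))"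

definition S_univ :: "nat \<Rightarrow> int set" where
  "S_univ m = {x. even x} \<union> {- 2 * int m .. 2 * int m}"

end

theory Submission
  imports Defs
begin

lemma tval_iso:
  assumes "tconsts t \<subseteq> A" "\<forall>c\<in>tconsts t. g c = c" "\<forall>n. e n \<in> A"
  shows "tval (g \<circ> e) t = g (tval e t) \<and> tval e t \<in> A"
  using assms by (cases t) auto

lemma sat_iso:
  assumes mono: "\<forall>x\<in>A. \<forall>y\<in>A. (g x \<le> g y \<longleftrightarrow> x \<le> y)"
    and img: "g ` A \<subseteq> B" and sur: "\<forall>y\<in>B. \<exists>x\<in>A. g x = y"
  shows "fconsts p \<subseteq> A \<Longrightarrow> (\<forall>c\<in>fconsts p. g c = c) \<Longrightarrow> (\<forall>n. e n \<in> A)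
     \<Longrightarrow> sat A e p \<longleftrightarrow> sat B (g \<circ> e) p"
proof (induction p arbitrary: e)
  case (Le s t)
  then have h: "tval (g \<circ> e) s = g (tval e s)" "tval e s \<in> A"
    "tval (g \<circ> e) t = g (tval e t)" "tval e t \<in> A"
    using tval_iso[of s A g e] tval_iso[of t A g e] by auto
  show ?case unfolding sat.simps h(1,3) using mono h(2,4) by blast
next
  case (Eq s t)
  then have h: "tval (g \<circ> e) s = g (tval e s)" "tval e s \<in> A"
    "tval (g \<circ> e) t = g (tval e t)" "tval e t \<in> A"
    using tval_iso[of s A g e] tval_iso[of t A g e] by auto
  show ?case unfolding sat.simps h(1,3) using mono h(2,4) by (metis order_antisym order_refl)
next
  case (Ex n p)
  have IH': "sat A (e(n := x)) p \<longleftrightarrow> sat B (g \<circ> (e(n := x))) p" if "x \<in> A" for x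
    by (rule Ex.IH) (use Ex.prems that in auto)
  have upd: "(g \<circ> e)(n := g x) = g \<circ> (e(n := x))" for x by auto
  show ?case
  proof
    assume "sat A e (Ex n p)"
    then obtain x where x: "x \<in> A" "sat A (e(n := x)) p" by auto
    then have "sat B (g \<circ> (e(n := x))) p" using IH' x by blast
    then have "sat B ((g \<circ> e)(n := g x)) p" using upd by metis
    moreover have "g x \<in> B" using x img by blast
    ultimately show "sat B (g \<circ> e) (Ex n p)" unfolding sat.simps by blast
  next
    assume "sat B (g \<circ> e) (Ex n p)"
    then obtain y where y: "y \<in> B" "sat B ((g \<circ> e)(n := y)) p" by auto
    then obtain x where x: "x \<in> A" "g x = y" using sur by auto
    then have "sat B (g \<circ> (e(n := x))) p" using y upd by metis
    then have "sat A (e(n := x)) p" using IH' x by blast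
    then show "sat A e (Ex n p)" using x by auto
  qed
next
  case (All n p)
  have IH': "sat A (e(n := x)) p \<longleftrightarrow> sat B (g \<circ> (e(n := x))) p" if "x \<in> A" for x
    by (rule All.IH) (use All.prems that in auto)
  have upd: "(g \<circ> e)(n := g x) = g \<circ> (e(n := x))" for x by auto
  show ?case
  proof
    assume a: "sat A e (All n p)"
    show "sat B (g \<circ> e) (All n p)"
    proof (simp only: sat.simps, intro ballI)
      fix y assume y: "y \<in> B"
      then obtain x where x: "x \<in> A" "g x = y" using sur by auto
      have "sat A (e(n := x)) p" using a x by auto
      then have "sat B (g \<circ> (e(n := x))) p" using IH' x by blast
      then show "sat B ((g \<circ> e)(n := y)) p" using x upd by metis
    qed
  next
    assume a: "sat B (g \<circ> e) (All n p)"
    show "sat A e (All n p)"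
    proof (simp only: sat.simps, intro ballI)
      fix x assume x: "x \<in> A"
      have "g x \<in> B" using x img by auto
      then have "sat B ((g \<circ> e)(n := g x)) p" using a by auto
      then have "sat B (g \<circ> (e(n := x))) p" using upd by metis
      then show "sat A (e(n := x)) p" using IH' x by blast
    qed
  qed
qed auto

definition gm :: "nat \<Rightarrow> int \<Rightarrow> int" where
  "gm m x = (if x > 2 * int m then 2 * x - 2 * int m else if x < - 2 * int m then 2 * x + 2 * int m else x)"

lemma gm_mono: "gm m x \<le> gm m y \<longleftrightarrow> x \<le> y"
  unfolding gm_def by auto

lemma gm_img: "gm m x \<in> S_univ m"
  unfolding gm_def S_univ_def by auto

lemma gm_sur: assumes "y \<in> S_univ m" shows "\<exists>x. gm m x = y"
proof (cases "y \<in> {- 2 * int m .. 2 * int m}")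
  case True then show ?thesis unfolding gm_def by (intro exI[of _ y]) auto
next
  case False
  then have "even y" using assms unfolding S_univ_def by auto
  then obtain k where k: "y = 2 * k" by blast
  show ?thesis
  proof (cases "y > 2 * int m")
    case True
    then show ?thesis using k unfolding gm_def by (intro exI[of _ "k + int m"]) auto
  next
    case f: False
    then show ?thesis using k False unfolding gm_def by (intro exI[of _ "k - int m"]) auto
  qed
qed

lemma gm_fix: "\<bar>c\<bar> \<le> 2 * int m \<Longrightarrow> gm m c = c"
  unfolding gm_def by auto

lemma sat_equiv:
  assumes "\<forall>c\<in>fconsts p. \<bar>c\<bar> \<le> 2 * int m"
  shows "(\<forall>e::nat\<Rightarrow>int. (\<forall>n. e n \<in> S_univ m) \<longrightarrow> sat (S_univ m) e p) \<longleftrightarrow> (\<forall>e::nat\<Rightarrow>int. sat UNIV e p)"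
proof -
  have iso: "sat UNIV e p \<longleftrightarrow> sat (S_univ m) (gm m \<circ> e) p" for e :: "nat \<Rightarrow> int"
  proof (rule sat_iso)
    show "\<forall>x\<in>UNIV. \<forall>y\<in>UNIV. (gm m x \<le> gm m y) = (x \<le> y)" using gm_mono by blast
    show "gm m ` UNIV \<subseteq> S_univ m" using gm_img by blast
    show "\<forall>y\<in>S_univ m. \<exists>x\<in>UNIV. gm m x = y" using gm_sur by blast
    show "fconsts p \<subseteq> UNIV" by simp
    show "\<forall>c\<in>fconsts p. gm m c = c" using assms gm_fix by blast
    show "\<forall>n. e n \<in> UNIV" by simp
  qed
  show ?thesis
  proof
    assume a: "\<forall>e::nat\<Rightarrow>int. (\<forall>n. e n \<in> S_univ m) \<longrightarrow> sat (S_univ m) e p"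
    show "\<forall>e::nat\<Rightarrow>int. sat UNIV e p"
    proof
      fix e :: "nat \<Rightarrow> int"
      have "\<forall>n. (gm m \<circ> e) n \<in> S_univ m" using gm_img by simp
      then have "sat (S_univ m) (gm m \<circ> e) p" using a by blast
      then show "sat UNIV e p" using iso by blast
    qed
  next
    assume a: "\<forall>e::nat\<Rightarrow>int. sat UNIV e p"
    show "\<forall>e::nat\<Rightarrow>int. (\<forall>n. e n \<in> S_univ m) \<longrightarrow> sat (S_univ m) e p"
    proof (intro allI impI)
      fix e :: "nat \<Rightarrow> int" assume e: "\<forall>n. e n \<in> S_univ m"
      have "\<forall>n. \<exists>x. gm m x = e n" using e gm_sur by blast
      then obtain h where h: "\<forall>n. gm m (h n) = e n" by metis
      have "gm m \<circ> h = e" using h by (simp add: fun_eq_iff)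
      then show "sat (S_univ m) e p" using iso[of h] a by metis
    qed
  qed
qed

lemma fconsts_finite: "finite (fconsts p)"
proof -
  have t: "finite (tconsts t)" for t by (cases t) auto
  show ?thesis by (induction p) (auto simp: t)
qed

lemma bound_exists: "\<exists>M. \<forall>c\<in>fconsts p. \<bar>c\<bar> \<le> 2 * int M"
proof -
  define B where "B = Max (insert 0 (abs ` fconsts p))"
  have B: "\<forall>c\<in>fconsts p. \<bar>c\<bar> \<le> B"
    unfolding B_def using fconsts_finite[of p] by (intro ballI Max_ge) auto
  show ?thesis using B by (intro exI[of _ "nat B"]) force
qed

lemma in_S: "\<bar>c\<bar> \<le> 2 * int m \<Longrightarrow> c \<in> S_univ m"
  unfolding S_univ_def by auto

lemma bound_mono: "\<forall>c\<in>F. \<bar>c\<bar> \<le> 2 * int M \<Longrightarrow> M \<le> m \<Longrightarrow> \<forall>c\<in>F. \<bar>c\<bar> \<le> 2 * int m"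
  by force

lemma not_elem: assumes "2 * int m + 1 \<in> B" shows "\<not> elem_sub (S_univ m) B"
proof
  assume es: "elem_sub (S_univ m) B"
  define p where "p = Ex 0 (Conj (Neg (Le (Var 0) (Cst (2 * int m))))
                                 (Neg (Le (Cst (2 * int m + 2)) (Var 0))))"
  have c1: "2 * int m \<in> S_univ m" unfolding S_univ_def by simp
  have c2: "2 * int m + 2 \<in> S_univ m" unfolding S_univ_def by simp
  have c: "fconsts p \<subseteq> S_univ m" unfolding p_def using c1 c2 by simp
  have z: "(0::int) \<in> S_univ m" unfolding S_univ_def by simp
  have e: "\<forall>n. (\<lambda>_. 0::int) n \<in> S_univ m" using z by simp
  have all: "\<forall>p e. fconsts p \<subseteq> S_univ m \<longrightarrow> (\<forall>n. e n \<in> S_univ m) \<longrightarrow> (sat (S_univ m) e p \<longleftrightarrow> sat B e p)"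
    using es unfolding elem_sub_def by (rule conjunct2)
  have iff: "sat (S_univ m) (\<lambda>_. 0) p \<longleftrightarrow> sat B (\<lambda>_. 0) p"
    using all c e by simp
  have "sat B (\<lambda>_. 0) p" unfolding p_def using assms(1)
    by (simp only: sat.simps tval.simps fun_upd_same) (intro bexI[of _ "2 * int m + 1"], simp_all)
  moreover have "\<not> sat (S_univ m) (\<lambda>_. 0) p"
  proof
    assume "sat (S_univ m) (\<lambda>_. 0) p"
    then obtain x where x: "x \<in> S_univ m" "\<not> x \<le> 2 * int m" "\<not> 2 * int m + 2 \<le> x"
      unfolding p_def by (simp only: sat.simps tval.simps fun_upd_same) blast
    then have xe: "x = 2 * int m + 1" by simp
    have "x \<notin> {- 2 * int m .. 2 * int m}" using x(2) by simp
    moreover have "odd x" using xe by simp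
    ultimately show False using x(1) unfolding S_univ_def by blast
  qed
  ultimately show False using iff by blast
qed

theorem mainTheorem8:
  shows "has_lim (\<lambda>m. Th_star (S_univ m)) (Th_star UNIV)
         \<and> (\<forall>m. \<not> elem_sub (S_univ m) UNIV
                 \<and> (\<forall>k>m. \<not> elem_sub (S_univ m) (S_univ k)))"
proof (intro conjI allI impI)
  show "has_lim (\<lambda>m. Th_star (S_univ m)) (Th_star UNIV)"
  proof -
    have A: "p \<in> liminf_fam (\<lambda>m. Th_star (S_univ m))" if "p \<in> Th_star UNIV" for p
    proof -
      obtain M where M: "\<forall>c\<in>fconsts p. \<bar>c\<bar> \<le> 2 * int M" using bound_exists by blast
      have "p \<in> Th_star (S_univ m)" if "m \<ge> M" for m
      proof -
        have b: "\<forall>c\<in>fconsts p. \<bar>c\<bar> \<le> 2 * int m" using bound_mono[OF M that] .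
        have p: "sentence p" "\<forall>e::nat\<Rightarrow>int. sat UNIV e p"
          using \<open>p \<in> Th_star UNIV\<close> unfolding Th_star_def by auto
        have fc: "fconsts p \<subseteq> S_univ m" using b in_S by blast
        have "\<forall>e::nat\<Rightarrow>int. (\<forall>n. e n \<in> S_univ m) \<longrightarrow> sat (S_univ m) e p"
          using sat_equiv[OF b] p(2) by blast
        then show ?thesis unfolding Th_star_def using p(1) fc by blast
      qed
      then show ?thesis unfolding liminf_fam_def by auto
    qed
    have B: "p \<in> Th_star UNIV" if "p \<in> limsup_fam (\<lambda>m. Th_star (S_univ m))" for p
    proof -
      obtain M where M: "\<forall>c\<in>fconsts p. \<bar>c\<bar> \<le> 2 * int M" using bound_exists by blast
      have "\<forall>n. \<exists>m\<ge>n. p \<in> Th_star (S_univ m)" using that unfolding limsup_fam_def by simp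
      then obtain m where m: "m \<ge> M" "p \<in> Th_star (S_univ m)" by blast
      have b: "\<forall>c\<in>fconsts p. \<bar>c\<bar> \<le> 2 * int m" using bound_mono[OF M m(1)] .
      have p: "sentence p" "\<forall>e::nat\<Rightarrow>int. (\<forall>n. e n \<in> S_univ m) \<longrightarrow> sat (S_univ m) e p"
        using m(2) unfolding Th_star_def by auto
      have "\<forall>e::nat\<Rightarrow>int. sat UNIV e p" using sat_equiv[OF b] p(2) by blast
      then show ?thesis unfolding Th_star_def using p(1) by blast
    qed
    have C: "liminf_fam D \<subseteq> limsup_fam D" for D :: "nat \<Rightarrow> fm set"
    proof
      fix x assume "x \<in> liminf_fam D"
      then obtain n where n: "\<forall>m\<ge>n. x \<in> D m" unfolding liminf_fam_def by blast
      have "\<exists>m\<ge>n'. x \<in> D m" for n' using n max.cobounded1 max.cobounded2 by blast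
      then show "x \<in> limsup_fam D" unfolding limsup_fam_def by blast
    qed
    show ?thesis unfolding has_lim_def using A B C[of "\<lambda>m. Th_star (S_univ m)"] by blast
  qed
next
  fix m show "\<not> elem_sub (S_univ m) UNIV" by (rule not_elem) simp
next
  fix m k :: nat assume "k > m"
  show "\<not> elem_sub (S_univ m) (S_univ k)"
  proof (rule not_elem)
    have "2 * int m + 1 \<in> {- 2 * int k .. 2 * int k}" using \<open>k > m\<close> by simp
    then show "2 * int m + 1 \<in> S_univ k" unfolding S_univ_def by blast
  qed
qed

end
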